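(* Let $n\ge2$. For $0\le p,q\le n$ let $d^n_{p,q}$ be the number of tuples $(i_1,\dots,i_p,j_1,\dots,j_q)$ with $1\le i_1<\dots<i_p\le n$, $1\le j_1<\dots<j_q\le n$ and $\sum_{r=1}^p i_r=\sum_{s=1}^q j_s$ (empty sums equal $0$; thus $d^n_{0,0}=1$, $d^n_{1,0}=d^n_{0,1}=0$), and for $0\le k\le 2n$ let $D^n_k=\sum_{p+q=k}d^n_{p,q}$. Then: (i) $d^n_{1,1}=d^n_{n-1,n-1}=n$ and $d^n_{k,k}\equiv\binom nk\pmod 2$; (ii) if $n$ is even then $d^n_{1,2}=\frac{n(n-2)}4$, and if $n$ is odd then $d^n_{1,2}=\left(\frac{n-1}2\right)^2$; (iii) $D^n_k=D^n_{2n-k}$ for $k=0,\dots,n$, and $D^n_0=1$, $D^n_1=0$, $D^n_2=n$; (iv) if $k$ is odd then $D^n_k$ is even; (v) $D^n_{2k}\equiv\binom nk\pmod 2$. *)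

theory Defs
  imports Complex_Main "HOL-Number_Theory.Cong"
begin

text \<open>Strictly increasing tuples (i_1<...<i_p) with entries in {1..n} are identified
  with subsets I of {1..n} of cardinality p; the tuple sum is the sum of the set.\<close>

definition dpq :: "nat \<Rightarrow> nat \<Rightarrow> nat \<Rightarrow> nat" where
  "dpq n p q = card {(I, J). I \<subseteq> {1..n} \<and> J \<subseteq> {1..n} \<and> card I = p \<and> card J = q
                              \<and> \<Sum>I = \<Sum>J}"

definition Dk :: "nat \<Rightarrow> nat \<Rightarrow> nat" where
  "Dk n k = (\<Sum>p\<le>n. \<Sum>q\<le>n. if p + q = k then dpq n p q else 0)"

end

theory Submission
  imports Defs
begin

definition T :: "nat \<Rightarrow> (nat \<Rightarrow> nat \<Rightarrow> bool) \<Rightarrow> (nat set \<times> nat set) set" where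
  "T n P = {(I, J). I \<subseteq> {1..n} \<and> J \<subseteq> {1..n} \<and> P (card I) (card J) \<and> \<Sum>I = \<Sum>J}"

lemma T_finite: "finite (T n P)"
proof -
  have "T n P \<subseteq> Pow {1..n} \<times> Pow {1..n}" unfolding T_def by auto
  then show ?thesis by (rule finite_subset) auto
qed

lemma card_le_n: "I \<subseteq> {1..n} \<Longrightarrow> card I \<le> (n::nat)"
  using card_mono[of "{1..n}" I] by auto

lemma sum0_empty: "I \<subseteq> {1..(n::nat)} \<Longrightarrow> \<Sum>I = 0 \<Longrightarrow> I = {}"
  using finite_subset[of I "{1..n}"] by (auto simp: sum_eq_0_iff)

lemma inv_even:
  "finite B \<Longrightarrow> (\<forall>x\<in>B. f x \<in> B \<and> f (f x) = x \<and> f x \<noteq> x) \<Longrightarrow> even (card B)"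
proof (induction "card B" arbitrary: B rule: less_induct)
  case less
  show ?case
  proof (cases "B = {}")
    case True then show ?thesis by simp
  next
    case False then obtain x where x: "x \<in> B" by blast
    have fx: "f x \<in> B" "f x \<noteq> x" "f (f x) = x" using less.prems x by auto
    let ?B = "B - {x, f x}"
    have c2: "card {x, f x} = 2" using fx by auto
    have c: "card B = card ?B + 2"
      using card_Diff_subset[of "{x, f x}" B] c2 x fx less.prems(1)
        card_mono[of B "{x, f x}"] by auto
    have "even (card ?B)"
    proof (rule less.hyps)
      show "card ?B < card B" using c by simp
      show "finite ?B" using less.prems by simp
      show "\<forall>y\<in>?B. f y \<in> ?B \<and> f (f y) = y \<and> f y \<noteq> y"
      proof
        fix y assume y: "y \<in> ?B"
        then have yB: "y \<in> B" "y \<noteq> x" "y \<noteq> f x" by auto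
        then have h: "f y \<in> B" "f (f y) = y" "f y \<noteq> y" using less.prems(2) by auto
        have "f y \<noteq> x" using h yB by auto
        moreover have "f y \<noteq> f x" using h yB fx by metis
        ultimately show "f y \<in> ?B \<and> f (f y) = y \<and> f y \<noteq> y" using h by auto
      qed
    qed
    then show ?thesis using c by simp
  qed
qed

lemma T_swap_parity:
  assumes "\<And>a b. P a b = P b a"
  shows "card (T n P) mod 2 = card {I. I \<subseteq> {1..n} \<and> P (card I) (card I)} mod 2"
proof -
  let ?A = "T n P"
  let ?F = "{x\<in>?A. fst x = snd x}"
  let ?S = "{I. I \<subseteq> {1..n} \<and> P (card I) (card I)}"
  have F: "?F = (\<lambda>I. (I, I)) ` ?S" unfolding T_def by auto
  have cF: "card ?F = card ?S" unfolding F by (rule card_image) (auto simp: inj_on_def)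
  have fin: "finite ?A" by (rule T_finite)
  have ev: "even (card (?A - ?F))"
  proof (rule inv_even[where f = "\<lambda>(I, J). (J, I)"])
    show "finite (?A - ?F)" using fin by simp
    show "\<forall>x\<in>?A - ?F. (case x of (I, J) \<Rightarrow> (J, I)) \<in> ?A - ?F \<and>
        (case (case x of (I, J) \<Rightarrow> (J, I)) of (I, J) \<Rightarrow> (J, I)) = x \<and>
        (case x of (I, J) \<Rightarrow> (J, I)) \<noteq> x"
      unfolding T_def using assms by auto
  qed
  have sub: "?F \<subseteq> ?A" by auto
  have finF: "finite ?F" using fin by auto
  have "card (?A - ?F) = card ?A - card ?F" by (rule card_Diff_subset[OF finF sub])
  moreover have "card ?F \<le> card ?A" by (rule card_mono[OF fin sub])
  ultimately have "card ?A = card ?F + card (?A - ?F)" by simp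
  then show ?thesis using ev cF by (auto elim!: evenE)
qed

lemma T_compl:
  assumes "\<forall>a\<le>n. \<forall>b\<le>n. Q a b = P (n - a) (n - b)"
  shows "card (T n Q) = card (T n P)"
proof -
  let ?g = "\<lambda>(I, J). ({1..n} - I, {1..n} - J)"
  have cd: "card ({1..n} - I) = n - card I" if "I \<subseteq> {1..n}" for I
    using that card_Diff_subset[of I "{1..n}"] finite_subset[of I "{1..n}"] by auto
  have sd: "\<Sum>({1..n} - I) = \<Sum>{1..n} - \<Sum>I" if "I \<subseteq> {1..n}" for I :: "nat set"
    using that sum_diff_nat[of I "{1..n}" "\<lambda>x. x"] finite_subset[of I "{1..n}"] by auto
  have dd: "{1..n} - ({1..n} - I) = I" if "I \<subseteq> {1..n}" for I :: "nat set"
    using that by auto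
  have "bij_betw ?g (T n Q) (T n P)"
  proof (rule bij_betw_byWitness[where f' = ?g])
    show "\<forall>a\<in>T n Q. ?g (?g a) = a" unfolding T_def using dd by auto
    show "\<forall>a\<in>T n P. ?g (?g a) = a" unfolding T_def using dd by auto
    show "?g ` T n Q \<subseteq> T n P"
    proof
      fix x assume "x \<in> ?g ` T n Q"
      then obtain I J where IJ: "I \<subseteq> {1..n}" "J \<subseteq> {1..n}" "Q (card I) (card J)" "\<Sum>I = \<Sum>J"
        and x: "x = ?g (I, J)" unfolding T_def by auto
      have "P (n - card I) (n - card J)" using assms IJ card_le_n by auto
      then show "x \<in> T n P" unfolding T_def x using IJ cd sd by auto
    qed
    show "?g ` T n P \<subseteq> T n Q"
    proof
      fix x assume "x \<in> ?g ` T n P"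
      then obtain I J where IJ: "I \<subseteq> {1..n}" "J \<subseteq> {1..n}" "P (card I) (card J)" "\<Sum>I = \<Sum>J"
        and x: "x = ?g (I, J)" unfolding T_def by auto
      have le: "card I \<le> n" "card J \<le> n" using IJ card_le_n by auto
      have "Q (n - card I) (n - card J)" using assms IJ le
        by (metis diff_diff_cancel diff_le_self)
      then show "x \<in> T n Q" unfolding T_def x using IJ cd sd by auto
    qed
  qed
  then show ?thesis by (rule bij_betw_same_card)
qed

lemma dpq_T: "dpq n p q = card (T n (\<lambda>a b. a = p \<and> b = q))"
  unfolding dpq_def T_def by simp

lemma Dk_T: "Dk n k = card (T n (\<lambda>a b. a + b = k))"
proof -
  let ?B = "\<lambda>p q. T n (\<lambda>a b. a = p \<and> b = q \<and> p + q = k)"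
  have eq: "T n (\<lambda>a b. a + b = k) = (\<Union>p\<in>{..n}. \<Union>q\<in>{..n}. ?B p q)"
    unfolding T_def using card_le_n by fastforce
  have c1: "card (\<Union>q\<in>{..n}. ?B p q) = (\<Sum>q\<le>n. card (?B p q))" for p
    apply (rule card_UN_disjoint)
      apply simp
     apply (simp add: T_finite)
    apply (auto simp: T_def)
    done
  have "card (\<Union>p\<in>{..n}. \<Union>q\<in>{..n}. ?B p q) = (\<Sum>p\<le>n. card (\<Union>q\<in>{..n}. ?B p q))"
    apply (rule card_UN_disjoint)
      apply simp
     apply (simp add: T_finite)
    apply (auto simp: T_def)
    done
  also have "\<dots> = (\<Sum>p\<le>n. \<Sum>q\<le>n. card (?B p q))" using c1 by simp
  also have "\<dots> = Dk n k" unfolding Dk_def dpq_T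
    by (intro sum.cong refl) (auto simp: T_def)
  finally show ?thesis using eq by simp
qed

lemma fin_sub: "I \<subseteq> {1..(n::nat)} \<Longrightarrow> finite I"
  using finite_subset by blast

lemma T11: "T n (\<lambda>a b. a = 1 \<and> b = 1) = (\<lambda>i. ({i}, {i})) ` {1..n}"
proof
  show "T n (\<lambda>a b. a = 1 \<and> b = 1) \<subseteq> (\<lambda>i. ({i}, {i})) ` {1..n}"
  proof
    fix x assume "x \<in> T n (\<lambda>a b. a = 1 \<and> b = 1)"
    then obtain I J where x: "x = (I, J)" and h: "I \<subseteq> {1..n}" "J \<subseteq> {1..n}"
      "card I = 1" "card J = 1" "\<Sum>I = \<Sum>J" unfolding T_def by auto
    obtain a where a: "I = {a}" using h(3) by (rule card_1_singletonE)
    obtain b where b: "J = {b}" using h(4) by (rule card_1_singletonE)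
    show "x \<in> (\<lambda>i. ({i}, {i})) ` {1..n}" using x a b h by auto
  qed
  show "(\<lambda>i. ({i}, {i})) ` {1..n} \<subseteq> T n (\<lambda>a b. a = 1 \<and> b = 1)"
    unfolding T_def by auto
qed

lemma card_T11: "card (T n (\<lambda>a b. a = 1 \<and> b = 1)) = n"
  unfolding T11 by (subst card_image) (auto simp: inj_on_def)

lemma T0: "T n (\<lambda>a b. a + b = 0) = {({}, {})}"
  unfolding T_def using fin_sub by auto

lemma T1: "T n (\<lambda>a b. a + b = 1) = {}"
proof -
  have False if h: "I \<subseteq> {1..n}" "J \<subseteq> {1..n}" "card I + card J = 1" "\<Sum>I = \<Sum>J" for I J
  proof -
    have fI: "finite I" "finite J" using h fin_sub by auto
    have "card I = 0 \<or> card J = 0" using h(3) by auto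
    then show False
    proof
      assume "card I = 0"
      then have "I = {}" using fI by auto
      then have "J = {}" using sum0_empty[OF h(2)] h(4) by simp
      then show False using h(3) \<open>I = {}\<close> by simp
    next
      assume "card J = 0"
      then have "J = {}" using fI by auto
      then have "I = {}" using sum0_empty[OF h(1)] h(4) by simp
      then show False using h(3) \<open>J = {}\<close> by simp
    qed
  qed
  then show ?thesis unfolding T_def by auto
qed

lemma T2: "T n (\<lambda>a b. a + b = 2) = T n (\<lambda>a b. a = 1 \<and> b = 1)"
proof -
  have "card I = 1 \<and> card J = 1" if h: "I \<subseteq> {1..n}" "J \<subseteq> {1..n}" "card I + card J = 2" "\<Sum>I = \<Sum>J" for I J
  proof -
    have fI: "finite I" "finite J" using h fin_sub by auto
    have "card I \<noteq> 0"
    proof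
      assume "card I = 0"
      then have "I = {}" using fI by auto
      then have "J = {}" using sum0_empty[OF h(2)] h(4) by simp
      then show False using h(3) \<open>I = {}\<close> by simp
    qed
    moreover have "card J \<noteq> 0"
    proof
      assume "card J = 0"
      then have "J = {}" using fI by auto
      then have "I = {}" using sum0_empty[OF h(1)] h(4) by simp
      then show False using h(3) \<open>J = {}\<close> by simp
    qed
    ultimately show ?thesis using h(3) by auto
  qed
  note key = this
  have "(I, J) \<in> T n (\<lambda>a b. a + b = 2) \<longleftrightarrow> (I, J) \<in> T n (\<lambda>a b. a = 1 \<and> b = 1)" for I J
  proof
    assume "(I, J) \<in> T n (\<lambda>a b. a + b = 2)"
    then have h: "I \<subseteq> {1..n}" "J \<subseteq> {1..n}" "card I + card J = 2" "\<Sum>I = \<Sum>J"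
      unfolding T_def by simp_all
    then show "(I, J) \<in> T n (\<lambda>a b. a = 1 \<and> b = 1)" using key[OF h] unfolding T_def by simp
  next
    assume "(I, J) \<in> T n (\<lambda>a b. a = 1 \<and> b = 1)"
    then show "(I, J) \<in> T n (\<lambda>a b. a + b = 2)" unfolding T_def by simp
  qed
  then show ?thesis by auto
qed

lemma T12: "T n (\<lambda>a b. a = 1 \<and> b = 2) = (\<lambda>(a, b). ({a + b}, {a, b})) ` {(a, b). 1 \<le> a \<and> a < b \<and> a + b \<le> n}"
proof
  show "T n (\<lambda>a b. a = 1 \<and> b = 2) \<subseteq> (\<lambda>(a, b). ({a + b}, {a, b})) ` {(a, b). 1 \<le> a \<and> a < b \<and> a + b \<le> n}"
  proof
    fix x assume "x \<in> T n (\<lambda>a b. a = 1 \<and> b = 2)"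
    then obtain I J where x: "x = (I, J)" and h: "I \<subseteq> {1..n}" "J \<subseteq> {1..n}"
      "card I = 1" "card J = 2" "\<Sum>I = \<Sum>J" unfolding T_def by auto
    obtain c where c: "I = {c}" using h(3) by (rule card_1_singletonE)
    obtain a b where ab: "J = {a, b}" "a \<noteq> b" using h(4) unfolding card_2_iff by blast
    show "x \<in> (\<lambda>(a, b). ({a + b}, {a, b})) ` {(a, b). 1 \<le> a \<and> a < b \<and> a + b \<le> n}"
    proof (cases "a < b")
      case True
      then have "x = (\<lambda>(a, b). ({a + b}, {a, b})) (a, b)" using x c ab h by auto
      moreover have "(a, b) \<in> {(a, b). 1 \<le> a \<and> a < b \<and> a + b \<le> n}"
        using True x c ab h by auto
      ultimately show ?thesis by blast
    next
      case False
      then have "x = (\<lambda>(a, b). ({a + b}, {a, b})) (b, a)" using x c ab h by auto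
      moreover have "(b, a) \<in> {(a, b). 1 \<le> a \<and> a < b \<and> a + b \<le> n}"
        using False x c ab h by auto
      ultimately show ?thesis by blast
    qed
  qed
  show "(\<lambda>(a, b). ({a + b}, {a, b})) ` {(a, b). 1 \<le> a \<and> a < b \<and> a + b \<le> n} \<subseteq> T n (\<lambda>a b. a = 1 \<and> b = 2)"
    unfolding T_def by auto
qed

lemma card_T12: "card (T n (\<lambda>a b. a = 1 \<and> b = 2)) = (\<Sum>a\<in>{1..n div 2}. n - 2 * a)"
proof -
  have inj: "inj_on (\<lambda>(a, b). ({a + b}, {a::nat, b})) {(a, b). 1 \<le> a \<and> a < b \<and> a + b \<le> n}"
    unfolding inj_on_def by (auto simp: doubleton_eq_iff)
  have eq: "{(a, b). 1 \<le> a \<and> a < b \<and> a + b \<le> n} = Sigma {1..n div 2} (\<lambda>a. {a<..n - a})"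
    by auto
  have "card (T n (\<lambda>a b. a = 1 \<and> b = 2)) = card {(a, b). 1 \<le> a \<and> a < b \<and> a + b \<le> n}"
    unfolding T12 by (rule card_image[OF inj])
  also have "\<dots> = (\<Sum>a\<in>{1..n div 2}. card {a<..n - a})" unfolding eq
    by (rule card_SigmaI) auto
  finally show ?thesis by (simp add: mult_2)
qed

lemma sum_closed: "2 * h \<le> n \<Longrightarrow> (\<Sum>a\<in>{1..h}. n - 2 * a) + h * (h + 1) = h * (n::nat)"
proof (induction h)
  case 0 then show ?case by simp
next
  case (Suc h)
  then have ih: "(\<Sum>a\<in>{1..h}. n - 2 * a) + h * (h + 1) = h * n" by simp
  have "(\<Sum>a\<in>{1..Suc h}. n - 2 * a) = (\<Sum>a\<in>{1..h}. n - 2 * a) + (n - 2 * Suc h)"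
    by simp
  then show ?case using ih Suc.prems by (simp add: algebra_simps)
qed

lemma choose_set: "card {I. I \<subseteq> {1..n} \<and> card I = k} = n choose k"
  using n_subsets[of "{1..n}" k] by simp

theorem lemma4p13:
  fixes n :: nat
  assumes "n \<ge> 2"
  shows "(dpq n 1 1 = n \<and> dpq n (n - 1) (n - 1) = n
          \<and> (\<forall>k\<le>n. [dpq n k k = n choose k] (mod 2)))
       \<and> (even n \<longrightarrow> real (dpq n 1 2) = real n * (real n - 2) / 4)
       \<and> (odd n \<longrightarrow> real (dpq n 1 2) = ((real n - 1) / 2) ^ 2)
       \<and> ((\<forall>k\<le>n. Dk n k = Dk n (2 * n - k)) \<and> Dk n 0 = 1 \<and> Dk n 1 = 0 \<and> Dk n 2 = n)
       \<and> (\<forall>k\<le>2 * n. odd k \<longrightarrow> even (Dk n k))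
       \<and> (\<forall>k\<le>n. [Dk n (2 * k) = n choose k] (mod 2))"
proof -
  have i1: "dpq n 1 1 = n" unfolding dpq_T by (rule card_T11)
  have i2: "dpq n (n - 1) (n - 1) = n"
  proof -
    have "card (T n (\<lambda>a b. a = n - 1 \<and> b = n - 1)) = card (T n (\<lambda>a b. a = 1 \<and> b = 1))"
      by (rule T_compl) (use assms in auto)
    then show ?thesis unfolding dpq_T using card_T11 by simp
  qed
  have i3: "\<forall>k\<le>n. [dpq n k k = n choose k] (mod 2)"
  proof (intro allI impI)
    fix k assume "k \<le> n"
    have "card (T n (\<lambda>a b. a = k \<and> b = k)) mod 2
        = card {I. I \<subseteq> {1..n} \<and> (card I = k \<and> card I = k)} mod 2"
      by (rule T_swap_parity) auto
    then show "[dpq n k k = n choose k] (mod 2)"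
      unfolding cong_def dpq_T using choose_set by simp
  qed
  define h where "h = n div 2"
  have sc: "(\<Sum>a\<in>{1..h}. n - 2 * a) + h * (h + 1) = h * n"
    by (rule sum_closed) (simp add: h_def)
  have d12: "dpq n 1 2 = (\<Sum>a\<in>{1..h}. n - 2 * a)" unfolding dpq_T card_T12 h_def ..
  have rs: "real (dpq n 1 2) + real h * (real h + 1) = real h * real n"
    using arg_cong[OF sc, of real] unfolding d12 of_nat_add of_nat_mult
    by (simp add: algebra_simps)
  have ii1: "even n \<longrightarrow> real (dpq n 1 2) = real n * (real n - 2) / 4"
  proof
    assume "even n"
    then have "n = 2 * h" unfolding h_def by simp
    then have "real n = 2 * real h" by simp
    then show "real (dpq n 1 2) = real n * (real n - 2) / 4" using rs
      by (simp add: algebra_simps)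
  qed
  have ii2: "odd n \<longrightarrow> real (dpq n 1 2) = ((real n - 1) / 2) ^ 2"
  proof
    assume "odd n"
    then have "n = 2 * h + 1" unfolding h_def by presburger
    then have "real n = 2 * real h + 1" by simp
    then show "real (dpq n 1 2) = ((real n - 1) / 2) ^ 2" using rs
      by (simp add: algebra_simps power2_eq_square)
  qed
  have iii1: "\<forall>k\<le>n. Dk n k = Dk n (2 * n - k)"
  proof (intro allI impI)
    fix k assume "k \<le> n"
    show "Dk n k = Dk n (2 * n - k)" unfolding Dk_T
      by (rule T_compl) (use \<open>k \<le> n\<close> in auto)
  qed
  have iii2: "Dk n 0 = 1" unfolding Dk_T T0 by simp
  have iii3: "Dk n 1 = 0" unfolding Dk_T T1 by simp
  have iii4: "Dk n 2 = n" unfolding Dk_T T2 by (rule card_T11)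
  have iv: "\<forall>k\<le>2 * n. odd k \<longrightarrow> even (Dk n k)"
  proof (intro allI impI)
    fix k :: nat assume "odd k"
    have "card (T n (\<lambda>a b. a + b = k)) mod 2
        = card {I. I \<subseteq> {1..n} \<and> card I + card I = k} mod 2"
      by (rule T_swap_parity) auto
    moreover have "{I. I \<subseteq> {1..n} \<and> card I + card I = k} = {}"
    proof -
      have "\<forall>I :: nat set. card I + card I \<noteq> k" using \<open>odd k\<close> by (metis even_add)
      then show ?thesis by blast
    qed
    ultimately have "card (T n (\<lambda>a b. a + b = k)) mod 2 = 0" by (metis card.empty mod_0)
    then show "even (Dk n k)" unfolding Dk_T by (simp add: even_iff_mod_2_eq_zero)
  qed
  have v: "\<forall>k\<le>n. [Dk n (2 * k) = n choose k] (mod 2)"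
  proof (intro allI impI)
    fix k assume "k \<le> n"
    have "card (T n (\<lambda>a b. a + b = 2 * k)) mod 2
        = card {I. I \<subseteq> {1..n} \<and> card I + card I = 2 * k} mod 2"
      by (rule T_swap_parity) auto
    moreover have "{I. I \<subseteq> {1..n} \<and> card I + card I = 2 * k} = {I. I \<subseteq> {1..n} \<and> card I = k}"
      by auto
    ultimately have "card (T n (\<lambda>a b. a + b = 2 * k)) mod 2 = (n choose k) mod 2"
      using choose_set[of n k] by simp
    then show "[Dk n (2 * k) = n choose k] (mod 2)"
      unfolding cong_def Dk_T .
  qed
  show ?thesis
    apply (intro conjI)
              apply (rule i1)
             apply (rule i2)
            apply (rule i3)
           apply (rule ii1)
          apply (rule ii2)
         apply (rule iii1)
        apply (rule iii2)
       apply (rule iii3)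
      apply (rule iii4)
     apply (rule iv)
    apply (rule v)
    done
qed

end
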